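(* Let $(\mathbf A,\tau)$ be a subdirectly irreducible state-morphism algebra such that $\mathbf A$ is subdirectly reducible (i.e. not subdirectly irreducible). Then there is a subdirectly irreducible algebra $\mathbf B$ of the same type as $\mathbf A$ such that $(\mathbf A,\tau)$ is $\mathbf B$-subdiagonal, i.e. $(\mathbf A,\tau)$ embeds into the diagonal state-morphism algebra $D(\mathbf B)=(\mathbf B\times\mathbf B,\tau_B)$.
   Context: Let $F$ be an arbitrary algebraic type. A state-morphism on an algebra $\mathbf A$ of type $F$ is an endomorphism $\tau:\mathbf A\to\mathbf A$ with $\tau\circ\tau=\tau$; $(\mathbf A,\tau)$, viewed as an algebra of type $F$ extended by the unary operation $\tau$, is a state-morphism algebra, and subdirect irreducibility of $(\mathbf A,\tau)$ refers to this extended algebra. For an algebra $\mathbf B$ of type $F$, $D(\mathbf B)=(\mathbf B\times\mathbf B,\tau_B)$ with $\tau_B(x,y)=(x,x)$ is the diagonal state-morphism algebra; an embedding of state-morphism algebras is an injective homomorphism of type $F$ commuting with the unary operations. *)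

theory Defs
  imports Main
begin

text \<open>An algebraic type (signature) is given by an arity function ar on operation
symbols of type 'f.\<close>

definition algebra :: "('f \<Rightarrow> nat) \<Rightarrow> 'a set \<Rightarrow> ('f \<Rightarrow> 'a list \<Rightarrow> 'a) \<Rightarrow> bool" where
  "algebra ar A f \<longleftrightarrow> A \<noteq> {} \<and>
     (\<forall>s xs. length xs = ar s \<and> set xs \<subseteq> A \<longrightarrow> f s xs \<in> A)"

definition hom :: "('f \<Rightarrow> nat) \<Rightarrow> 'a set \<Rightarrow> ('f \<Rightarrow> 'a list \<Rightarrow> 'a)
                    \<Rightarrow> 'b set \<Rightarrow> ('f \<Rightarrow> 'b list \<Rightarrow> 'b) \<Rightarrow> ('a \<Rightarrow> 'b) \<Rightarrow> bool" where
  "hom ar A f B g h \<longleftrightarrow> (\<forall>x\<in>A. h x \<in> B) \<and>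
     (\<forall>s xs. length xs = ar s \<and> set xs \<subseteq> A \<longrightarrow> h (f s xs) = g s (map h xs))"

definition congruence :: "('f \<Rightarrow> nat) \<Rightarrow> 'a set \<Rightarrow> ('f \<Rightarrow> 'a list \<Rightarrow> 'a) \<Rightarrow> 'a rel \<Rightarrow> bool" where
  "congruence ar A f \<theta> \<longleftrightarrow> equiv A \<theta> \<and>
     (\<forall>s xs ys. length xs = ar s \<and> length ys = ar s \<and> set xs \<subseteq> A \<and> set ys \<subseteq> A \<and>
        list_all2 (\<lambda>x y. (x, y) \<in> \<theta>) xs ys \<longrightarrow> (f s xs, f s ys) \<in> \<theta>)"

definition subdirectly_irreducible ::
    "('f \<Rightarrow> nat) \<Rightarrow> 'a set \<Rightarrow> ('f \<Rightarrow> 'a list \<Rightarrow> 'a) \<Rightarrow> bool" where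
  "subdirectly_irreducible ar A f \<longleftrightarrow> algebra ar A f \<and> (\<exists>a\<in>A. \<exists>b\<in>A. a \<noteq> b) \<and>
     (\<exists>\<mu>. congruence ar A f \<mu> \<and> \<mu> \<noteq> Id_on A \<and>
          (\<forall>\<theta>. congruence ar A f \<theta> \<and> \<theta> \<noteq> Id_on A \<longrightarrow> \<mu> \<subseteq> \<theta>))"

text \<open>Extension of the type by one unary operation symbol (None) interpreted by \<tau>.\<close>

definition ext_ar :: "('f \<Rightarrow> nat) \<Rightarrow> 'f option \<Rightarrow> nat" where
  "ext_ar ar o' = (case o' of None \<Rightarrow> 1 | Some s \<Rightarrow> ar s)"

definition ext_ops :: "('f \<Rightarrow> 'a list \<Rightarrow> 'a) \<Rightarrow> ('a \<Rightarrow> 'a) \<Rightarrow> 'f option \<Rightarrow> 'a list \<Rightarrow> 'a" where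
  "ext_ops f \<tau> o' xs = (case o' of None \<Rightarrow> \<tau> (hd xs) | Some s \<Rightarrow> f s xs)"

definition state_morphism ::
    "('f \<Rightarrow> nat) \<Rightarrow> 'a set \<Rightarrow> ('f \<Rightarrow> 'a list \<Rightarrow> 'a) \<Rightarrow> ('a \<Rightarrow> 'a) \<Rightarrow> bool" where
  "state_morphism ar A f \<tau> \<longleftrightarrow> algebra ar A f \<and> hom ar A f A f \<tau> \<and> (\<forall>x\<in>A. \<tau> (\<tau> x) = \<tau> x)"

definition prod_ops :: "('f \<Rightarrow> 'b list \<Rightarrow> 'b) \<Rightarrow> 'f \<Rightarrow> ('b \<times> 'b) list \<Rightarrow> 'b \<times> 'b" where
  "prod_ops g s xs = (g s (map fst xs), g s (map snd xs))"

definition diag_tau :: "'b \<times> 'b \<Rightarrow> 'b \<times> 'b" where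
  "diag_tau p = (fst p, fst p)"

definition sm_embedding ::
    "('f \<Rightarrow> nat) \<Rightarrow> 'a set \<Rightarrow> ('f \<Rightarrow> 'a list \<Rightarrow> 'a) \<Rightarrow> ('a \<Rightarrow> 'a)
     \<Rightarrow> 'b set \<Rightarrow> ('f \<Rightarrow> 'b list \<Rightarrow> 'b) \<Rightarrow> ('b \<Rightarrow> 'b) \<Rightarrow> ('a \<Rightarrow> 'b) \<Rightarrow> bool" where
  "sm_embedding ar A f \<tau> C g \<sigma> h \<longleftrightarrow> hom ar A f C g h \<and> inj_on h A \<and>
     (\<forall>x\<in>A. h (\<tau> x) = \<sigma> (h x))"

end

theory Submission
  imports Defs
begin

lemma chain_list:
  assumes ch: "subset.chain S C" and ne: "C \<noteq> {}"
    and l: "list_all2 (\<lambda>x y. (x,y)\<in>\<Union>C) xs ys"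
  shows "\<exists>\<theta>\<in>C. list_all2 (\<lambda>x y. (x,y)\<in>\<theta>) xs ys"
  using l
proof (induction rule: list_all2_induct)
  case Nil
  then show ?case using ne by auto
next
  case (Cons x xs y ys)
  then obtain t1 where t1: "t1 \<in> C" "(x,y) \<in> t1" by auto
  from Cons obtain t2 where t2: "t2 \<in> C" "list_all2 (\<lambda>x y. (x,y)\<in>t2) xs ys" by auto
  from ch t1(1) t2(1) have "t1 \<subseteq> t2 \<or> t2 \<subseteq> t1" unfolding subset.chain_def by blast
  then show ?case
  proof
    assume "t1 \<subseteq> t2" then show ?thesis using t1 t2 by auto
  next
    assume s: "t2 \<subseteq> t1"
    have "list_all2 (\<lambda>x y. (x,y)\<in>t1) xs ys"
      using t2(2) by (rule list_all2_mono) (use s in auto)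
    then show ?thesis using t1 by auto
  qed
qed

lemma list_all2_map_same:
  assumes "\<And>x y. P x y \<Longrightarrow> Q (g x) (g y)" "list_all2 P xs ys"
  shows "list_all2 Q (map g xs) (map g ys)"
  using assms(2) by (induction rule: list_all2_induct) (auto simp: assms(1))

lemma Id_congr:
  fixes A :: "'a set"
  assumes "algebra ar A f" shows "congruence ar A f (Id_on A)"
proof -
  have "list_all2 (\<lambda>x y. (x, y) \<in> Id_on A) xs ys \<Longrightarrow> xs = ys" for xs ys :: "'a list"
    by (induction rule: list_all2_induct) auto
  then show ?thesis using assms unfolding congruence_def algebra_def
    by (auto simp: equiv_def refl_on_def sym_def trans_def) (metis Id_onI)
qed

theorem theorem3p6:
  fixes ar :: "'f \<Rightarrow> nat" and A :: "'a set"
    and f :: "'f \<Rightarrow> 'a list \<Rightarrow> 'a" and \<tau> :: "'a \<Rightarrow> 'a"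
  assumes "state_morphism ar A f \<tau>"
    and "subdirectly_irreducible (ext_ar ar) A (ext_ops f \<tau>)"
    and "\<not> subdirectly_irreducible ar A f"
  shows "\<exists>(B :: 'a set set) g. subdirectly_irreducible ar B g \<and>
           (\<exists>h. sm_embedding ar A f \<tau> (B \<times> B) (prod_ops g) diag_tau h)"
proof -
  have alg: "algebra ar A f" and tauhom: "hom ar A f A f \<tau>" and idem: "\<And>x. x\<in>A \<Longrightarrow> \<tau> (\<tau> x) = \<tau> x"
    using assms(1) unfolding state_morphism_def by auto
  have tauA: "\<And>x. x\<in>A \<Longrightarrow> \<tau> x \<in> A" using tauhom unfolding hom_def by auto
  have tauf: "\<And>s xs. length xs = ar s \<Longrightarrow> set xs \<subseteq> A \<Longrightarrow> \<tau> (f s xs) = f s (map \<tau> xs)"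
    using tauhom unfolding hom_def by auto
  have falg: "\<And>s xs. length xs = ar s \<Longrightarrow> set xs \<subseteq> A \<Longrightarrow> f s xs \<in> A"
    using alg unfolding algebra_def by auto
  obtain \<mu> where mu: "congruence (ext_ar ar) A (ext_ops f \<tau>) \<mu>" "\<mu> \<noteq> Id_on A"
    "\<And>\<theta>. congruence (ext_ar ar) A (ext_ops f \<tau>) \<theta> \<Longrightarrow> \<theta> \<noteq> Id_on A \<Longrightarrow> \<mu> \<subseteq> \<theta>"
    using assms(2) unfolding subdirectly_irreducible_def by blast
  have "equiv A \<mu>" using mu(1) unfolding congruence_def by auto
  then have "\<mu> \<subseteq> A \<times> A" "Id_on A \<subseteq> \<mu>" unfolding equiv_def refl_on_def by auto
  then obtain a b where ab: "(a,b) \<in> \<mu>" "a \<noteq> b" "a \<in> A" "b \<in> A" using mu(2) by auto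
  define S where "S = {\<phi>. congruence ar A f \<phi> \<and> (a,b) \<notin> \<phi>}"
  have "Id_on A \<in> S" using Id_congr[OF alg] ab unfolding S_def by auto
  then have "S \<noteq> {}" by auto
  moreover have "\<Union>C \<in> S" if cne: "C \<noteq> {}" and ch: "subset.chain S C" for C
  proof -
    have CS: "C \<subseteq> S" using ch unfolding subset.chain_def by auto
    have cmp: "\<And>t1 t2. t1 \<in> C \<Longrightarrow> t2 \<in> C \<Longrightarrow> t1 \<subseteq> t2 \<or> t2 \<subseteq> t1"
      using ch unfolding subset.chain_def by auto
    have eqv: "\<And>t. t \<in> C \<Longrightarrow> equiv A t" using CS unfolding S_def congruence_def by auto
    have "equiv A (\<Union>C)"
      unfolding equiv_def refl_on_def sym_def trans_def
    proof (intro conjI allI impI)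
      show "\<Union>C \<subseteq> A \<times> A" using eqv unfolding equiv_def refl_on_def by blast
      show "\<forall>x\<in>A. (x, x) \<in> \<Union>C" using eqv cne unfolding equiv_def refl_on_def by blast
      show "(y, x) \<in> \<Union>C" if "(x, y) \<in> \<Union>C" for x y
        using that eqv unfolding equiv_def sym_def by blast
      show "(x, z) \<in> \<Union>C" if xyz: "(x, y) \<in> \<Union>C" "(y, z) \<in> \<Union>C" for x y z
      proof -
        obtain t1 t2 where "t1 \<in> C" "t2 \<in> C" "(x,y)\<in>t1" "(y,z)\<in>t2" using xyz by blast
        then show ?thesis using cmp[of t1 t2] eqv[of t1] eqv[of t2]
          unfolding equiv_def trans_def by blast
      qed
    qed
    moreover have "(f s xs, f s ys) \<in> \<Union>C" if prm: "length xs = ar s" "length ys = ar s" "set xs \<subseteq> A"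
      "set ys \<subseteq> A" "list_all2 (\<lambda>x y. (x, y) \<in> \<Union>C) xs ys" for s xs ys
    proof -
      obtain t where "t \<in> C" "list_all2 (\<lambda>x y. (x,y)\<in>t) xs ys"
        using chain_list[OF ch cne prm(5)] by auto
      then show ?thesis using CS prm unfolding S_def congruence_def by blast
    qed
    moreover have "(a,b) \<notin> \<Union>C" using CS unfolding S_def by auto
    ultimately show ?thesis unfolding S_def congruence_def by auto
  qed
  ultimately obtain \<phi> where phiS: "\<phi> \<in> S" and phimax: "\<And>X. X \<in> S \<Longrightarrow> \<phi> \<subseteq> X \<Longrightarrow> X = \<phi>"
    using subset_Zorn_nonempty[of S] by blast
  have phic: "congruence ar A f \<phi>" and abphi: "(a,b) \<notin> \<phi>" using phiS unfolding S_def by auto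
  have phieq: "equiv A \<phi>" using phic unfolding congruence_def by auto
  have phiops: "\<And>s xs ys. length xs = ar s \<Longrightarrow> length ys = ar s \<Longrightarrow> set xs \<subseteq> A \<Longrightarrow> set ys \<subseteq> A \<Longrightarrow>
        list_all2 (\<lambda>x y. (x, y) \<in> \<phi>) xs ys \<Longrightarrow> (f s xs, f s ys) \<in> \<phi>"
    using phic unfolding congruence_def by blast
  define q where "q x = \<phi> `` {x}" for x
  define rep :: "'a set \<Rightarrow> 'a" where "rep X = (SOME x. x \<in> X)" for X
  define B where "B = A // \<phi>"
  define g where "g s Xs = q (f s (map rep Xs))" for s Xs
  have qB: "\<And>x. x \<in> A \<Longrightarrow> q x \<in> B" unfolding q_def B_def by (rule quotientI)
  have qeq: "\<And>x y. x \<in> A \<Longrightarrow> y \<in> A \<Longrightarrow> q x = q y \<longleftrightarrow> (x,y) \<in> \<phi>"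
    unfolding q_def using phieq by (simp add: equiv_class_eq_iff)
  have Bq: "\<And>X. X \<in> B \<Longrightarrow> \<exists>x\<in>A. X = q x" unfolding B_def q_def quotient_def by auto
  have repq: "\<And>x. x \<in> A \<Longrightarrow> rep (q x) \<in> A \<and> (x, rep (q x)) \<in> \<phi>"
  proof -
    fix x assume x: "x \<in> A"
    have "x \<in> q x" unfolding q_def using phieq x by (simp add: equiv_class_self equiv_def refl_on_def)
    then have "rep (q x) \<in> q x" unfolding rep_def by (rule someI)
    then show "rep (q x) \<in> A \<and> (x, rep (q x)) \<in> \<phi>" unfolding q_def using phieq
      unfolding equiv_def refl_on_def by auto
  qed
  have qhom: "\<And>s xs. length xs = ar s \<Longrightarrow> set xs \<subseteq> A \<Longrightarrow> q (f s xs) = g s (map q xs)"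
  proof -
    fix s xs assume l: "length xs = ar s" and s: "set xs \<subseteq> A"
    have l2: "list_all2 (\<lambda>x y. (x, y) \<in> \<phi>) xs (map rep (map q xs))"
      using s by (induction xs) (auto simp: repq)
    have "set (map rep (map q xs)) \<subseteq> A" using s repq by auto
    then have "(f s xs, f s (map rep (map q xs))) \<in> \<phi>" using phiops[OF l _ s _ l2] l by simp
    then show "q (f s xs) = g s (map q xs)" unfolding g_def
      using qeq falg l s \<open>set (map rep (map q xs)) \<subseteq> A\<close> by auto
  qed
  have liftB: "\<And>Xs. set Xs \<subseteq> B \<Longrightarrow> \<exists>xs. set xs \<subseteq> A \<and> Xs = map q xs"
  proof -
    fix Xs :: "'a set list" assume "set Xs \<subseteq> B"
    then show "\<exists>xs. set xs \<subseteq> A \<and> Xs = map q xs"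
    proof (induction Xs)
      case Nil then show ?case by auto
    next
      case (Cons X Xs)
      then obtain xs where "set xs \<subseteq> A" "Xs = map q xs" by auto
      moreover obtain x where "x \<in> A" "X = q x" using Bq Cons.prems by auto
      ultimately show ?case by (intro exI[of _ "x # xs"]) auto
    qed
  qed
  have algB: "algebra ar B g"
    unfolding algebra_def
  proof (intro conjI allI impI)
    show "B \<noteq> {}" using qB ab by auto
    fix s Xs assume h: "length Xs = ar s \<and> set Xs \<subseteq> B"
    then obtain xs where "set xs \<subseteq> A" "Xs = map q xs" using liftB by blast
    then show "g s Xs \<in> B" using h qhom[of xs s] falg[of xs s] qB[of "f s xs"] by auto
  qed
  have qab: "q a \<noteq> q b" using qeq ab abphi by auto
  define \<mu>B where "\<mu>B = \<Inter>{\<Theta>. congruence ar B g \<Theta> \<and> (q a, q b) \<in> \<Theta>}"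
  have BB: "congruence ar B g (B \<times> B)"
    using algB unfolding congruence_def algebra_def
    by (auto simp: equiv_def refl_on_def sym_def trans_def)
  have muBc: "congruence ar B g \<mu>B"
  proof -
    let ?F = "{\<Theta>. congruence ar B g \<Theta> \<and> (q a, q b) \<in> \<Theta>}"
    have BBF: "B \<times> B \<in> ?F" using BB qB ab by auto
    have eqvF: "\<And>t. t \<in> ?F \<Longrightarrow> equiv B t" unfolding congruence_def by auto
    have "equiv B \<mu>B" unfolding \<mu>B_def equiv_def refl_on_def sym_def trans_def
    proof (intro conjI allI impI)
      show "\<Inter>?F \<subseteq> B \<times> B" using BBF by blast
      show "\<forall>x\<in>B. (x, x) \<in> \<Inter>?F" using eqvF unfolding equiv_def refl_on_def by blast
      show "(y, x) \<in> \<Inter>?F" if "(x, y) \<in> \<Inter>?F" for x y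
        using that eqvF unfolding equiv_def sym_def by blast
      show "(x, z) \<in> \<Inter>?F" if "(x, y) \<in> \<Inter>?F" "(y, z) \<in> \<Inter>?F" for x y z
        using that eqvF unfolding equiv_def trans_def by blast
    qed
    moreover have "(g s xs, g s ys) \<in> \<mu>B" if "length xs = ar s" "length ys = ar s" "set xs \<subseteq> B"
      "set ys \<subseteq> B" "list_all2 (\<lambda>x y. (x, y) \<in> \<mu>B) xs ys" for s xs ys
      unfolding \<mu>B_def
    proof
      fix t assume t: "t \<in> ?F"
      have "list_all2 (\<lambda>x y. (x, y) \<in> t) xs ys"
        using that(5) by (rule list_all2_mono) (use t in \<open>auto simp: \<mu>B_def\<close>)
      then show "(g s xs, g s ys) \<in> t" using t that unfolding congruence_def by blast
    qed
    ultimately show ?thesis unfolding congruence_def by auto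
  qed
  have muBab: "(q a, q b) \<in> \<mu>B" unfolding \<mu>B_def by auto
  have key: "(q a, q b) \<in> \<Theta>" if tc: "congruence ar B g \<Theta>" and tn: "\<Theta> \<noteq> Id_on B" for \<Theta>
  proof -
    define P where "P = {(x,y). x \<in> A \<and> y \<in> A \<and> (q x, q y) \<in> \<Theta>}"
    have teq: "equiv B \<Theta>" using tc unfolding congruence_def by auto
    have tops: "\<And>s xs ys. length xs = ar s \<Longrightarrow> length ys = ar s \<Longrightarrow> set xs \<subseteq> B \<Longrightarrow> set ys \<subseteq> B \<Longrightarrow>
        list_all2 (\<lambda>x y. (x, y) \<in> \<Theta>) xs ys \<Longrightarrow> (g s xs, g s ys) \<in> \<Theta>"
      using tc unfolding congruence_def by blast
    have "equiv A P" unfolding P_def equiv_def refl_on_def sym_def trans_def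
      using teq qB unfolding equiv_def refl_on_def sym_def trans_def by blast
    moreover have "(f s xs, f s ys) \<in> P" if "length xs = ar s" "length ys = ar s" "set xs \<subseteq> A"
      "set ys \<subseteq> A" "list_all2 (\<lambda>x y. (x, y) \<in> P) xs ys" for s xs ys
    proof -
      have "list_all2 (\<lambda>x y. (x, y) \<in> \<Theta>) (map q xs) (map q ys)"
        by (rule list_all2_map_same[OF _ that(5)]) (auto simp: P_def)
      then have "(g s (map q xs), g s (map q ys)) \<in> \<Theta>"
        using tops[of "map q xs" s "map q ys"] that qB by auto
      then show ?thesis using that qhom falg unfolding P_def by auto
    qed
    ultimately have Pc: "congruence ar A f P" unfolding congruence_def by auto
    have phiP: "\<phi> \<subseteq> P"
    proof
      fix p assume "p \<in> \<phi>"
      then obtain x y where p: "p = (x,y)" "(x,y) \<in> \<phi>" by (cases p) auto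
      then have "x \<in> A" "y \<in> A" using phieq unfolding equiv_def refl_on_def by auto
      moreover have "q x = q y" using p qeq calculation by auto
      ultimately show "p \<in> P" using p qB teq unfolding P_def equiv_def refl_on_def by auto
    qed
    have "\<Theta> \<subseteq> B \<times> B" "Id_on B \<subseteq> \<Theta>" using teq unfolding equiv_def refl_on_def by auto
    then obtain X Y where XY: "(X,Y) \<in> \<Theta>" "X \<noteq> Y" "X \<in> B" "Y \<in> B" using tn by auto
    then obtain x y where "x \<in> A" "y \<in> A" "X = q x" "Y = q y" using Bq by metis
    then have "(x,y) \<in> P" "(x,y) \<notin> \<phi>" using XY qeq unfolding P_def by auto
    then have "P \<noteq> \<phi>" by auto
    then have "P \<notin> S" using phimax phiP by blast
    then have "(a,b) \<in> P" using Pc unfolding S_def by auto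
    then show ?thesis unfolding P_def by auto
  qed
  have SIB: "subdirectly_irreducible ar B g"
    unfolding subdirectly_irreducible_def
  proof (intro conjI)
    show "algebra ar B g" by (rule algB)
    show "\<exists>a\<in>B. \<exists>b\<in>B. a \<noteq> b" using qab qB ab by blast
    show "\<exists>\<mu>. congruence ar B g \<mu> \<and> \<mu> \<noteq> Id_on B \<and>
          (\<forall>\<theta>. congruence ar B g \<theta> \<and> \<theta> \<noteq> Id_on B \<longrightarrow> \<mu> \<subseteq> \<theta>)"
    proof (intro exI[of _ \<mu>B] conjI allI impI)
      show "congruence ar B g \<mu>B" by (rule muBc)
      show "\<mu>B \<noteq> Id_on B" using muBab qab by auto
      fix \<theta> assume "congruence ar B g \<theta> \<and> \<theta> \<noteq> Id_on B"
      then show "\<mu>B \<subseteq> \<theta>" using key unfolding \<mu>B_def by blast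
    qed
  qed
  define h where "h x = (q (\<tau> x), q x)" for x
  define \<psi> where "\<psi> = {(x,y). (x,y) \<in> \<phi> \<and> (\<tau> x, \<tau> y) \<in> \<phi>}"
  have psic: "congruence (ext_ar ar) A (ext_ops f \<tau>) \<psi>"
  proof -
    have "equiv A \<psi>" unfolding \<psi>_def equiv_def refl_on_def sym_def trans_def
      using phieq tauA unfolding equiv_def refl_on_def sym_def trans_def by blast
    moreover have "(ext_ops f \<tau> o' xs, ext_ops f \<tau> o' ys) \<in> \<psi>" if prm: "length xs = ext_ar ar o'"
      "length ys = ext_ar ar o'" "set xs \<subseteq> A" "set ys \<subseteq> A"
      "list_all2 (\<lambda>x y. (x, y) \<in> \<psi>) xs ys" for o' xs ys
    proof (cases o')
      case None
      then obtain x y where "xs = [x]" "ys = [y]" using prm(1,2)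
        by (auto simp: ext_ar_def length_Suc_conv)
      then show ?thesis using prm None idem by (auto simp: ext_ops_def \<psi>_def)
    next
      case (Some s)
      have l1: "list_all2 (\<lambda>x y. (x, y) \<in> \<phi>) xs ys"
        using that(5) by (rule list_all2_mono) (auto simp: \<psi>_def)
      have l2: "list_all2 (\<lambda>x y. (x, y) \<in> \<phi>) (map \<tau> xs) (map \<tau> ys)"
        by (rule list_all2_map_same[OF _ that(5)]) (auto simp: \<psi>_def)
      have "set (map \<tau> xs) \<subseteq> A" "set (map \<tau> ys) \<subseteq> A" using that tauA by auto
      then show ?thesis using that Some phiops[OF _ _ _ _ l1, of s] phiops[OF _ _ _ _ l2, of s] tauf
        by (auto simp: ext_ops_def ext_ar_def \<psi>_def)
    qed
    ultimately show ?thesis unfolding congruence_def by auto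
  qed
  have "\<psi> = Id_on A"
  proof (rule ccontr)
    assume "\<psi> \<noteq> Id_on A"
    then have "\<mu> \<subseteq> \<psi>" using mu(3) psic by auto
    then show False using ab abphi unfolding \<psi>_def by auto
  qed
  have emb: "sm_embedding ar A f \<tau> (B \<times> B) (prod_ops g) diag_tau h"
    unfolding sm_embedding_def hom_def
  proof (intro conjI ballI allI impI)
    fix x assume "x \<in> A" then show "h x \<in> B \<times> B" unfolding h_def using qB tauA by auto
  next
    fix s xs assume l: "length xs = ar s \<and> set xs \<subseteq> A"
    then have "set (map \<tau> xs) \<subseteq> A" using tauA by auto
    then show "h (f s xs) = prod_ops g s (map h xs)"
      unfolding h_def prod_ops_def using l tauf qhom by (simp add: comp_def)
  next
    show "inj_on h A"
    proof (rule inj_onI)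
      fix x y assume "x \<in> A" "y \<in> A" "h x = h y"
      then have "(x,y) \<in> \<psi>" unfolding h_def \<psi>_def using qeq tauA by auto
      then show "x = y" using \<open>\<psi> = Id_on A\<close> by auto
    qed
  next
    fix x assume "x \<in> A" then show "h (\<tau> x) = diag_tau (h x)"
      unfolding h_def diag_tau_def using idem by simp
  qed
  show ?thesis using SIB emb by blast
qed

end
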